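(* Let $0<\epsilon\le0.01$, $\Delta\ge0$, and let $\mathbb{K}_1,\mathbb{K}_2$ be joint distributions of $(X,Y)\in\mathbb{R}^d\times(0,\infty)$ whose $X$-marginals have the same support $S$. Suppose that for all $x_i,x_j\in S$, the conditional distributions $\mathbb{D}_i=Y\mid(X=x_i)$ and $\mathbb{D}_j=Y\mid(X=x_j)$ (which may be taken under either $\mathbb{K}_1$ or $\mathbb{K}_2$) satisfy $\mathrm{EMD}(\mathbb{D}_i,\mathbb{D}_j)\le\Delta$. Then for every $\theta\in\mathbb{R}^+$, $$\mathbb{E}_{(x,y)\sim\mathbb{K}_1}[g(\theta+\epsilon,y)]\le(1+\epsilon)\left(1+\frac{\Delta}{\epsilon^2}\right)\mathbb{E}_{(x,y)\sim\mathbb{K}_2}[g(\theta,y)],$$ and $$\inf_{\theta}\mathbb{E}_{(x,y)\sim\mathbb{K}_1}[g(\theta,y)]\le(1+\epsilon)\left(1+\frac{\Delta}{\epsilon^2}\right)\inf_{\theta}\mathbb{E}_{(x,y)\sim\mathbb{K}_2}[g(\theta,y)],$$ where the infima are over constant thresholds $\theta\in\mathbb{R}^+$.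
   Context: For threshold $\theta\ge0$ and season length $y>0$: $g(\theta,y)=\frac{1+\theta}{\min\{1,y\}}$ if $y\ge\theta$ and $g(\theta,y)=\frac{y}{\min\{1,y\}}$ otherwise (the competitive ratio of the ski-rental strategy that rents, at cost $1$ per unit time, until time $\theta$ and then buys at cost $1$). Earth mover distance: for distributions $\mathbb{X},\mathbb{Y}$ on $\mathbb{R}$, $\mathrm{EMD}(\mathbb{X},\mathbb{Y})=\min\mathbb{E}_{(u,v)\sim\mathbb{J}}|u-v|$ over all couplings $\mathbb{J}$ with marginals $\mathbb{X},\mathbb{Y}$. *)

theory Defs
  imports "HOL-Probability.Probability"
begin

text \<open>Competitive ratio of the ski-rental strategy with threshold theta on season length y.\<close>
definition ski_g :: "real \<Rightarrow> real \<Rightarrow> real" where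
  "ski_g \<theta> y = (if y \<ge> \<theta> then (1 + \<theta>) / min 1 y else y / min 1 y)"

definition couplings :: "real measure \<Rightarrow> real measure \<Rightarrow> (real \<times> real) measure set" where
  "couplings D1 D2 = {J. prob_space J \<and> sets J = sets (borel :: (real \<times> real) measure)
      \<and> distr J borel fst = D1 \<and> distr J borel snd = D2}"

definition EMD :: "real measure \<Rightarrow> real measure \<Rightarrow> ennreal" where
  "EMD D1 D2 = (INF J \<in> couplings D1 D2. \<integral>\<^sup>+ z. ennreal \<bar>fst z - snd z\<bar> \<partial>J)"

definition support_of :: "'a::metric_space measure \<Rightarrow> 'a set" where
  "support_of \<mu> = {x. \<forall>e>0. emeasure \<mu> (ball x e) > 0}"

text \<open>kappa is (a version of) the conditional distribution of Y given X under the
  joint distribution K of (X,Y): a probability kernel such that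
  K(A x B) = integral over A of kappa x (B) w.r.t. the X-marginal.\<close>
definition cond_dist :: "('a::topological_space \<times> real) measure \<Rightarrow> ('a \<Rightarrow> real measure) \<Rightarrow> bool" where
  "cond_dist K \<kappa> \<longleftrightarrow> \<kappa> \<in> measurable borel (prob_algebra borel) \<and>
     (\<forall>A \<in> sets borel. \<forall>B \<in> sets borel.
        emeasure K (A \<times> B) = (\<integral>\<^sup>+ x \<in> A. emeasure (\<kappa> x) B \<partial>(distr K borel fst)))"

end

theory Submission
  imports Defs
begin


lemma g_ge1: "0 \<le> \<theta> \<Longrightarrow> 0 < v \<Longrightarrow> 1 \<le> ski_g \<theta> v"
  unfolding ski_g_def by (auto simp: min_def field_simps)

lemma g_pt:
  fixes \<epsilon> \<theta> u v :: real
  assumes e: "0 < \<epsilon>" "\<epsilon> \<le> 1/2" and th: "0 \<le> \<theta>" and v: "0 < v"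
  shows "ski_g (\<theta> + \<epsilon>) u \<le> (1 + \<epsilon>) * ski_g \<theta> v + (1 + \<epsilon>) / \<epsilon>\<^sup>2 * \<bar>u - v\<bar>"
proof -
  define c where "c = (1 + \<epsilon>) / \<epsilon>\<^sup>2"
  have c1: "c \<ge> 1 / \<epsilon>\<^sup>2" unfolding c_def using e by (simp add: divide_right_mono)
  have eps2: "\<epsilon>\<^sup>2 \<le> 1" using e by (simp add: power_le_one)
  have c_ge1: "c \<ge> 1" using c1 eps2 e by (smt (verit) le_divide_eq_1_pos zero_less_power)
  have cmul: "\<And>t. t \<ge> 0 \<Longrightarrow> c * t \<ge> t" using c_ge1 by (simp add: mult_le_cancel_right1)
  have ce: "c * \<epsilon> \<ge> 1 / \<epsilon>" using c1 e by (simp add: power2_eq_square field_simps)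
  have ee: "\<epsilon> * \<epsilon> \<le> \<epsilon> * (1/2)" using e by (intro mult_left_mono) auto
  have ee2: "\<epsilon> + \<epsilon> * \<epsilon> < 1" using e ee by linarith
  have ie: "1 / \<epsilon> > 1 + \<epsilon>" using e ee2 by (simp add: field_simps)
  have gv: "ski_g \<theta> v \<ge> 1" using g_ge1 th v by auto
  have gv3: "(1 + \<epsilon>) * ski_g \<theta> v \<ge> ski_g \<theta> v"
  proof -
    have "\<epsilon> * ski_g \<theta> v \<ge> 0" using e gv by simp
    then show ?thesis by (simp add: algebra_simps)
  qed
  have cpos: "c > 0" unfolding c_def using e by simp
  have cw: "c * \<bar>u - v\<bar> \<ge> 0" using cpos by simp
  have "ski_g (\<theta> + \<epsilon>) u \<le> (1 + \<epsilon>) * ski_g \<theta> v + c * \<bar>u - v\<bar>"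
  proof (cases "u \<le> 0")
    case True
    have "ski_g (\<theta> + \<epsilon>) u \<le> 1" using True th e unfolding ski_g_def by (auto simp: min_def)
    moreover have "(1 + \<epsilon>) * ski_g \<theta> v \<ge> 1" using gv gv3 by linarith
    ultimately show ?thesis using cw by linarith
  next
    case u: False
    show ?thesis
    proof (cases "u < \<theta> + \<epsilon>")
      case True
      have L: "ski_g (\<theta> + \<epsilon>) u = max 1 u" using True u unfolding ski_g_def by (auto simp: min_def max_def)
      show ?thesis
      proof (cases "v < \<theta>")
        case True
        have R: "ski_g \<theta> v = max 1 v" using True v unfolding ski_g_def by (auto simp: min_def max_def)
        have "c * \<bar>u - v\<bar> \<ge> \<bar>u - v\<bar>" using c1 e cpos
          using cmul by simp
        moreover have "(1 + \<epsilon>) * max 1 v \<ge> max 1 v" using e by (simp add: max_def)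
        moreover have "max 1 u \<le> max 1 v + \<bar>u - v\<bar>" by (auto simp: max_def)
        ultimately show ?thesis unfolding L R by linarith
      next
        case False
        have "ski_g \<theta> v = (1+\<theta>) / min 1 v" using False v unfolding ski_g_def by auto
        also have "\<dots> \<ge> (1 + \<theta>) / 1" by (rule divide_left_mono) (use v th in auto)
        finally have "ski_g \<theta> v \<ge> 1 + \<theta>" by simp
        moreover have "max 1 u \<le> 1 + \<theta>" using True e th by auto
        ultimately show ?thesis unfolding L using cw gv3 by linarith
      qed
    next
      case uge: False
      have L: "ski_g (\<theta> + \<epsilon>) u = (1 + \<theta> + \<epsilon>) / min 1 u" using uge unfolding ski_g_def by auto
      show ?thesis
      proof (cases "v < \<theta>")
        case True
        have R: "ski_g \<theta> v = max 1 v" using True v unfolding ski_g_def by (auto simp: min_def max_def)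
        define w where "w = u - v"
        have w: "w \<ge> \<epsilon>" using True uge w_def by linarith
        have cw2: "c * \<bar>u - v\<bar> = c * w" using w e w_def by simp
        have cwge: "c * w \<ge> w + 1" using ce ie w e c1
        proof -
          have "c * w = c * \<epsilon> + c * (w - \<epsilon>)" by (simp add: algebra_simps)
          moreover have "c * (w - \<epsilon>) \<ge> w - \<epsilon>" using c1 e w
            using cmul w by simp
          ultimately show ?thesis using ce ie e by linarith
        qed
        show ?thesis
        proof (cases "u \<ge> 1")
          case True
          then have "ski_g (\<theta> + \<epsilon>) u = 1 + \<theta> + \<epsilon>" using L by simp
          moreover have "(1 + \<epsilon>) * max 1 v \<ge> max 1 v" using e by (simp add: max_def)
          moreover have "max 1 v \<ge> v" by simp
          ultimately show ?thesis unfolding R cw2 using w_def uge e th cwge by linarith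
        next
          case False
          have "ski_g (\<theta> + \<epsilon>) u = (1 + \<theta> + \<epsilon>) / u" using L False by simp
          also have "\<dots> \<le> (1 + u) / u" using uge u by (simp add: divide_right_mono)
          also have "\<dots> = 1 + 1 / u" using u by (simp add: field_simps)
          also have "\<dots> \<le> 1 + 1 / \<epsilon>" using uge th e by (simp add: frac_le)
          finally have A: "ski_g (\<theta> + \<epsilon>) u \<le> 1 + 1 / \<epsilon>" .
          have "c * w \<ge> c * \<epsilon>" using w cpos by simp
          moreover have "(1 + \<epsilon>) * max 1 v \<ge> max 1 v" using e by (simp add: max_def)
          moreover have "max 1 v \<ge> 1" by simp
          ultimately show ?thesis unfolding R c_def[symmetric] cw2 using A ce by linarith
        qed
      next
        case vge: False
        have R: "ski_g \<theta> v = (1 + \<theta>) / min 1 v" using vge unfolding ski_g_def by auto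
        have mu: "min 1 u > 0" using u by simp
        have mv: "min 1 v > 0" using v by simp
        have L2: "ski_g (\<theta> + \<epsilon>) u \<le> (1 + \<epsilon>) * (1 + \<theta>) / min 1 u"
          unfolding L using mu e th by (intro divide_right_mono) (auto simp: algebra_simps mult_nonneg_nonneg)
        show ?thesis
        proof (cases "v \<le> u")
          case True
          have "min 1 v \<le> min 1 u" using True by simp
          then have "(1 + \<epsilon>) * (1 + \<theta>) / min 1 u \<le> (1 + \<epsilon>) * (1 + \<theta>) / min 1 v"
            using mv e th by (intro divide_left_mono) auto
          then show ?thesis using L2 R cw by simp
        next
          case False
          show ?thesis
          proof (cases "\<theta> \<ge> 1")
            case True
            then have "min 1 u = 1" "min 1 v = 1" using vge uge e by auto
            then show ?thesis using L2 R cw by simp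
          next
            case th1: False
            define m0 where "m0 = min 1 (\<theta> + \<epsilon>)"
            have m0p: "m0 > 0" using e th unfolding m0_def by simp
            have mu2: "min 1 u \<ge> m0" using uge unfolding m0_def by auto
            have mle: "min 1 v - min 1 u \<le> \<bar>u - v\<bar>" using False by auto
            have mle2: "min 1 u \<le> min 1 v" using False by auto
            have "(1 + \<epsilon>) * (1 + \<theta>) / min 1 u - (1 + \<epsilon>) * (1 + \<theta>) / min 1 v
                 = (1 + \<epsilon>) * (1 + \<theta>) * (min 1 v - min 1 u) / (min 1 u * min 1 v)"
              using mu mv by (simp add: field_simps)
            also have "\<dots> \<le> (1 + \<epsilon>) * (1 + \<theta>) * \<bar>u - v\<bar> / (m0^2)"
            proof (rule frac_le)
              show "0 \<le> (1 + \<epsilon>) * (1 + \<theta>) * \<bar>u - v\<bar>" using e th by simp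
              show "(1 + \<epsilon>) * (1 + \<theta>) * (min 1 v - min 1 u) \<le> (1 + \<epsilon>) * (1 + \<theta>) * \<bar>u - v\<bar>"
                using mle e th by (intro mult_left_mono) auto
              show "0 < m0\<^sup>2" using m0p by simp
              have "m0^2 \<le> min 1 u * min 1 u" using mu2 m0p
                by (simp add: power2_eq_square mult_mono)
              also have "\<dots> \<le> min 1 u * min 1 v" using mle2 mu by simp
              finally show "m0\<^sup>2 \<le> min 1 u * min 1 v" .
            qed
            also have "\<dots> \<le> c * \<bar>u - v\<bar>"
            proof -
              have "(1 + \<theta>) / m0^2 \<le> 1 / \<epsilon>^2"
              proof -
                have key: "\<epsilon>^2 * (1 + \<theta>) \<le> m0^2"
                proof (cases "\<theta> + \<epsilon> \<le> 1")
                  case True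
                  then have m0e: "m0 = \<theta> + \<epsilon>" unfolding m0_def by simp
                  have "\<epsilon> * \<epsilon> \<le> 2 * \<epsilon>" using ee e by linarith
                  then have a: "\<epsilon> * \<epsilon> * \<theta> \<le> 2 * \<epsilon> * \<theta>" using th by (rule mult_right_mono)
                  have b: "(\<theta> + \<epsilon>)^2 = \<theta> * \<theta> + 2 * \<epsilon> * \<theta> + \<epsilon> * \<epsilon>"
                    by (simp add: power2_eq_square algebra_simps)
                  have d: "\<epsilon>^2 * (1 + \<theta>) = \<epsilon> * \<epsilon> + \<epsilon> * \<epsilon> * \<theta>"
                    by (simp add: power2_eq_square algebra_simps)
                  have "\<theta> * \<theta> \<ge> 0" by simp
                  then show ?thesis unfolding m0e using a b d by linarith
                next
                  case False
                  then have m0e: "m0 = 1" unfolding m0_def by simp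
                  have "\<epsilon>^2 * (1 + \<theta>) \<le> \<epsilon>^2 * 2" using th1 by (intro mult_left_mono) auto
                  moreover have "\<epsilon> * \<epsilon> \<le> 1/4" using ee e by linarith
                  then have "\<epsilon>^2 \<le> 1/4" by (simp add: power2_eq_square)
                  ultimately show ?thesis unfolding m0e by simp
                qed
                then have "\<epsilon>^2 * (1 + \<theta>) \<le> m0^2" .
                then show ?thesis using e th m0p by (simp add: field_simps)
              qed
              then have "(1 + \<epsilon>) * ((1 + \<theta>) / m0^2) * \<bar>u - v\<bar> \<le> (1 + \<epsilon>) * (1 / \<epsilon>^2) * \<bar>u - v\<bar>"
                using e by (intro mult_right_mono mult_left_mono) auto
              then show ?thesis unfolding c_def by (simp add: field_simps)
            qed
            finally show ?thesis using L2 R unfolding c_def[symmetric] by (simp add: field_simps)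
          qed
        qed
      qed
    qed
  qed
  then show ?thesis unfolding c_def .
qed

lemma meas_g[measurable]: "ski_g \<theta> \<in> borel_measurable borel"
  unfolding ski_g_def by measurable

lemma fst_meas: "fst \<in> measurable (borel :: ('a::second_countable_topology \<times> 'b::second_countable_topology) measure) borel"
  by (simp add: borel_prod[symmetric])

lemma snd_meas: "snd \<in> measurable (borel :: ('a::second_countable_topology \<times> 'b::second_countable_topology) measure) borel"
  by (simp add: borel_prod[symmetric])

lemma g_pt_enn:
  fixes \<epsilon> \<theta> u v :: real
  assumes e: "0 < \<epsilon>" "\<epsilon> \<le> 1/2" and th: "0 \<le> \<theta>" and v: "0 < v"
  shows "ennreal (ski_g (\<theta> + \<epsilon>) u) \<le> ennreal (1 + \<epsilon>) * ennreal (ski_g \<theta> v) + ennreal ((1 + \<epsilon>) / \<epsilon>\<^sup>2) * ennreal \<bar>u - v\<bar>"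
proof -
  have "ski_g \<theta> v \<ge> 0" using g_ge1[OF th v] by simp
  note gn = this
  have 1: "ennreal ((1 + \<epsilon>) * ski_g \<theta> v) = ennreal (1 + \<epsilon>) * ennreal (ski_g \<theta> v)"
    by (rule ennreal_mult) (use e gn in auto)
  have 2: "ennreal ((1 + \<epsilon>) / \<epsilon>\<^sup>2 * \<bar>u - v\<bar>) = ennreal ((1 + \<epsilon>) / \<epsilon>\<^sup>2) * ennreal \<bar>u - v\<bar>"
    by (rule ennreal_mult) (use e in auto)
  have 3: "ennreal ((1 + \<epsilon>) * ski_g \<theta> v + (1 + \<epsilon>) / \<epsilon>\<^sup>2 * \<bar>u - v\<bar>)
     = ennreal ((1 + \<epsilon>) * ski_g \<theta> v) + ennreal ((1 + \<epsilon>) / \<epsilon>\<^sup>2 * \<bar>u - v\<bar>)"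
    by (rule ennreal_plus) (use e gn in auto)
  have "ennreal (1 + \<epsilon>) * ennreal (ski_g \<theta> v) + ennreal ((1 + \<epsilon>) / \<epsilon>\<^sup>2) * ennreal \<bar>u - v\<bar>
     = ennreal ((1 + \<epsilon>) * ski_g \<theta> v + (1 + \<epsilon>) / \<epsilon>\<^sup>2 * \<bar>u - v\<bar>)"
    unfolding 3 1 2 ..
  moreover have "ennreal (ski_g (\<theta> + \<epsilon>) u) \<le> ennreal ((1 + \<epsilon>) * ski_g \<theta> v + (1 + \<epsilon>) / \<epsilon>\<^sup>2 * \<bar>u - v\<bar>)"
    by (rule ennreal_leI, rule g_pt[OF e th v])
  ultimately show ?thesis by simp
qed




lemma pair_bound:
  fixes D D' :: "real measure" and \<epsilon> \<theta> \<Delta> :: real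
  assumes e: "0 < \<epsilon>" "\<epsilon> \<le> 1/2" and th: "0 \<le> \<theta>" and Dl: "\<Delta> \<ge> 0"
    and D': "AE v in D'. v > 0"
    and emd: "EMD D D' \<le> ennreal \<Delta>"
  shows "(\<integral>\<^sup>+u. ennreal (ski_g (\<theta> + \<epsilon>) u) \<partial>D)
     \<le> ennreal (1 + \<epsilon>) * (\<integral>\<^sup>+v. ennreal (ski_g \<theta> v) \<partial>D') + ennreal ((1 + \<epsilon>) / \<epsilon>\<^sup>2 * \<Delta>)"
proof (rule ennreal_le_epsilon)
  fix e' :: real assume e': "0 < e'"
  define c where "c = (1 + \<epsilon>) / \<epsilon>\<^sup>2"
  have cpos: "c > 0" unfolding c_def using e by simp
  have "ennreal \<Delta> < ennreal (\<Delta> + e' / c)" proof (intro ennreal_lessI)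
    have "e' / c > 0" using e' cpos by simp
    then show "0 < \<Delta> + e' / c" "\<Delta> < \<Delta> + e' / c" using Dl by auto
  qed
  then have "EMD D D' < ennreal (\<Delta> + e' / c)" using emd by simp
  then obtain J where J: "J \<in> couplings D D'"
    and JX: "(\<integral>\<^sup>+ z. ennreal \<bar>fst z - snd z\<bar> \<partial>J) < ennreal (\<Delta> + e' / c)"
    unfolding EMD_def INF_less_iff by blast
  from J have Jsets: "sets J = sets borel" and Dd: "D = distr J borel fst" and Dd': "D' = distr J borel snd"
    unfolding couplings_def by auto
  have Js2: "sets J = sets (borel \<Otimes>\<^sub>M borel :: (real \<times> real) measure)" using Jsets by (simp add: borel_prod[symmetric])
  have mfst: "fst \<in> measurable J borel" using measurable_cong_sets[OF Jsets refl] fst_meas by blast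
  have msnd: "snd \<in> measurable J borel" using measurable_cong_sets[OF Jsets refl] snd_meas by blast
  have L: "(\<integral>\<^sup>+u. ennreal (ski_g (\<theta> + \<epsilon>) u) \<partial>D) = (\<integral>\<^sup>+z. ennreal (ski_g (\<theta> + \<epsilon>) (fst z)) \<partial>J)"
    unfolding Dd by (rule nn_integral_distr[OF mfst]) measurable
  have R: "(\<integral>\<^sup>+v. ennreal (ski_g \<theta> v) \<partial>D') = (\<integral>\<^sup>+z. ennreal (ski_g \<theta> (snd z)) \<partial>J)"
    unfolding Dd' by (rule nn_integral_distr[OF msnd]) measurable
  have AEJ: "AE z in J. snd z > 0"
    using D' unfolding Dd' by (subst (asm) AE_distr_iff[OF msnd]) auto
  note [measurable] = mfst msnd
  have m1: "(\<lambda>z. ennreal (ski_g \<theta> (snd z))) \<in> borel_measurable J"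
    by measurable
  have m2: "(\<lambda>z. ennreal \<bar>fst z - snd z\<bar>) \<in> borel_measurable J"
    by measurable
  have "(\<integral>\<^sup>+z. ennreal (ski_g (\<theta> + \<epsilon>) (fst z)) \<partial>J)
      \<le> (\<integral>\<^sup>+z. ennreal (1 + \<epsilon>) * ennreal (ski_g \<theta> (snd z)) + ennreal c * ennreal \<bar>fst z - snd z\<bar> \<partial>J)"
  proof (rule nn_integral_mono_AE)
    show "AE z in J. ennreal (ski_g (\<theta> + \<epsilon>) (fst z))
       \<le> ennreal (1 + \<epsilon>) * ennreal (ski_g \<theta> (snd z)) + ennreal c * ennreal \<bar>fst z - snd z\<bar>"
      using AEJ
    proof (rule eventually_mono)
      fix z :: "real \<times> real" assume "snd z > 0"
      from g_pt_enn[OF e th this, of "fst z"]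
      show "ennreal (ski_g (\<theta> + \<epsilon>) (fst z))
       \<le> ennreal (1 + \<epsilon>) * ennreal (ski_g \<theta> (snd z)) + ennreal c * ennreal \<bar>fst z - snd z\<bar>"
        unfolding c_def .
    qed
  qed
  also have "\<dots> = ennreal (1 + \<epsilon>) * (\<integral>\<^sup>+z. ennreal (ski_g \<theta> (snd z)) \<partial>J)
       + ennreal c * (\<integral>\<^sup>+z. ennreal \<bar>fst z - snd z\<bar> \<partial>J)"
    using m1 m2 by (simp add: nn_integral_add nn_integral_cmult)
  also have "\<dots> \<le> ennreal (1 + \<epsilon>) * (\<integral>\<^sup>+z. ennreal (ski_g \<theta> (snd z)) \<partial>J)
       + ennreal c * ennreal (\<Delta> + e' / c)"
    using JX by (intro add_left_mono mult_left_mono) auto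
  also have "ennreal c * ennreal (\<Delta> + e' / c) = ennreal (c * \<Delta>) + ennreal e'"
  proof -
    have p: "\<Delta> + e' / c \<ge> 0" using Dl e' cpos by simp
    have "ennreal c * ennreal (\<Delta> + e' / c) = ennreal (c * (\<Delta> + e' / c))"
      using cpos p by (simp add: ennreal_mult)
    also have "c * (\<Delta> + e' / c) = c * \<Delta> + e'" using cpos by (simp add: distrib_left)
    also have "ennreal (c * \<Delta> + e') = ennreal (c * \<Delta>) + ennreal e'"
      using cpos Dl e' by (intro ennreal_plus) auto
    finally show ?thesis .
  qed
  finally show "(\<integral>\<^sup>+u. ennreal (ski_g (\<theta> + \<epsilon>) u) \<partial>D)
     \<le> ennreal (1 + \<epsilon>) * (\<integral>\<^sup>+v. ennreal (ski_g \<theta> v) \<partial>D') + ennreal ((1 + \<epsilon>) / \<epsilon>\<^sup>2 * \<Delta>) + ennreal e'"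
    unfolding L R c_def by (simp add: add.assoc)
qed




lemma supp_AE:
  fixes \<mu> :: "(real ^ 'd::finite) measure"
  assumes s: "sets \<mu> = sets borel"
  shows "AE x in \<mu>. x \<in> support_of \<mu>"
proof -
  define F where "F = {ball x e | x e. e > 0 \<and> emeasure \<mu> (ball x e) = 0}"
  have "\<And>S. S \<in> F \<Longrightarrow> open S" unfolding F_def by auto
  then obtain F' where F': "F' \<subseteq> F" "countable F'" "\<Union>F' = \<Union>F" by (rule Lindelof)
  have null: "\<Union>F' \<in> null_sets \<mu>"
  proof -
    have "(\<Union>S\<in>F'. S) \<in> null_sets \<mu>"
    proof (rule null_sets_UN'[OF F'(2)])
      fix S assume "S \<in> F'"
      then obtain x e where S: "S = ball x e" "emeasure \<mu> (ball x e) = 0" using F'(1) unfolding F_def by auto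
      have "S \<in> sets \<mu>" unfolding s S by simp
      then show "S \<in> null_sets \<mu>" using S by auto
    qed
    then show ?thesis by simp
  qed
  show ?thesis
  proof (rule AE_I'[OF null])
    show "{x \<in> space \<mu>. x \<notin> support_of \<mu>} \<subseteq> \<Union>F'"
    proof
      fix x assume "x \<in> {x \<in> space \<mu>. x \<notin> support_of \<mu>}"
      then obtain e where "e > 0" "\<not> emeasure \<mu> (ball x e) > 0" unfolding support_of_def by auto
      then have "ball x e \<in> F" unfolding F_def by (auto simp: not_less)
      then have "x \<in> \<Union>F" using \<open>e > 0\<close> by (intro UnionI[of "ball x e"]) auto
      then show "x \<in> \<Union>F'" using F'(3) by simp
    qed
  qed
qed

lemma disint:
  fixes K :: "((real ^ 'd::finite) \<times> real) measure" and \<kappa> :: "real ^ 'd \<Rightarrow> real measure"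
  assumes Ks: "sets K = sets borel" and cond: "cond_dist K \<kappa>"
  shows "\<kappa> \<in> measurable (distr K borel fst) (subprob_algebra borel)"
    and "distr K borel snd = distr K borel fst \<bind> \<kappa>"
    and "\<And>x. prob_space (\<kappa> x)" and "\<And>x. sets (\<kappa> x) = sets borel"
proof -
  have kp: "\<kappa> \<in> measurable borel (prob_algebra borel)" using cond unfolding cond_dist_def by auto
  have ms: "measurable (distr K borel fst) N = measurable borel N" for N :: "real measure measure"
    by (rule measurable_cong_sets) auto
  show km: "\<kappa> \<in> measurable (distr K borel fst) (subprob_algebra borel)"
    unfolding ms by (rule measurable_prob_algebraD[OF kp])
  show "prob_space (\<kappa> x)" "sets (\<kappa> x) = sets borel" for x
    using measurable_space[OF kp, of x] by (auto simp: space_prob_algebra)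
  have spK: "space K = UNIV" using sets_eq_imp_space_eq[OF Ks] by simp
  have msnd: "snd \<in> measurable K borel" using measurable_cong_sets[OF Ks refl] snd_meas by blast
  have ne: "space (distr K borel fst) \<noteq> {}" by simp
  show "distr K borel snd = distr K borel fst \<bind> \<kappa>"
  proof (rule measure_eqI)
    show "sets (distr K borel snd) = sets (distr K borel fst \<bind> \<kappa>)"
      using sets_bind_measurable[OF km ne] by simp
    fix A assume "A \<in> sets (distr K borel snd)"
    then have A: "A \<in> sets borel" by simp
    have "emeasure (distr K borel snd) A = emeasure K (UNIV \<times> A)"
    proof -
      have "snd -` A \<inter> space K = UNIV \<times> A" using spK by auto
      then show ?thesis using emeasure_distr[OF msnd A] by simp
    qed
    also have "\<dots> = (\<integral>\<^sup>+ x \<in> UNIV. emeasure (\<kappa> x) A \<partial>(distr K borel fst))"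
      using cond A unfolding cond_dist_def by auto
    also have "\<dots> = emeasure (distr K borel fst \<bind> \<kappa>) A"
      using emeasure_bind[OF ne km A] by simp
    finally show "emeasure (distr K borel snd) A = emeasure (distr K borel fst \<bind> \<kappa>) A" .
  qed
qed




lemma exp_eq:
  fixes K :: "((real ^ 'd::finite) \<times> real) measure" and \<kappa> :: "real ^ 'd \<Rightarrow> real measure"
  assumes Ks: "sets K = sets borel" and cond: "cond_dist K \<kappa>" and f: "f \<in> borel_measurable borel"
  shows "(\<integral>\<^sup>+z. f (snd z) \<partial>K) = (\<integral>\<^sup>+x. \<integral>\<^sup>+y. f y \<partial>\<kappa> x \<partial>(distr K borel fst))"
proof -
  have msnd: "snd \<in> measurable K borel" using measurable_cong_sets[OF Ks refl] snd_meas by blast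
  have "(\<integral>\<^sup>+z. f (snd z) \<partial>K) = (\<integral>\<^sup>+y. f y \<partial>distr K borel snd)"
  proof -
    have "measurable (distr K borel snd) N = measurable borel N" for N :: "ennreal measure"
      by (rule measurable_cong_sets) auto
    then have f': "f \<in> borel_measurable (distr K borel snd)" using f by simp
    show ?thesis by (rule nn_integral_distr[OF msnd f', symmetric])
  qed
  also have "\<dots> = (\<integral>\<^sup>+x. \<integral>\<^sup>+y. f y \<partial>\<kappa> x \<partial>(distr K borel fst))"
    unfolding disint(2)[OF Ks cond] by (rule nn_integral_bind[OF f disint(1)[OF Ks cond]])
  finally show ?thesis .
qed

lemma AE_pos:
  fixes K :: "((real ^ 'd::finite) \<times> real) measure" and \<kappa> :: "real ^ 'd \<Rightarrow> real measure"
  assumes Ks: "sets K = sets borel" and cond: "cond_dist K \<kappa>" and pos: "AE z in K. snd z > 0"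
  shows "AE x in distr K borel fst. AE y in \<kappa> x. y > 0"
proof -
  have msnd: "snd \<in> measurable K borel" using measurable_cong_sets[OF Ks refl] snd_meas by blast
  have "AE y in distr K borel snd. y > 0"
    using pos by (subst AE_distr_iff[OF msnd]) auto
  then show ?thesis
    unfolding disint(2)[OF Ks cond] by (subst (asm) AE_bind[OF disint(1)[OF Ks cond]]) auto
qed

lemma b_ge1:
  fixes D :: "real measure"
  assumes p: "prob_space D" and th: "0 \<le> \<theta>" and pos: "AE y in D. y > 0"
  shows "1 \<le> (\<integral>\<^sup>+y. ennreal (ski_g \<theta> y) \<partial>D)"
proof -
  have "(\<integral>\<^sup>+y. 1 \<partial>D) \<le> (\<integral>\<^sup>+y. ennreal (ski_g \<theta> y) \<partial>D)"
    using pos by (intro nn_integral_mono_AE) (auto elim!: eventually_mono intro: g_ge1[OF th])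
  then show ?thesis using prob_space.emeasure_space_1[OF p] by simp
qed




theorem mainTheorem7:
  fixes K1 K2 :: "((real ^ 'd::finite) \<times> real) measure"
    and \<kappa>1 \<kappa>2 :: "real ^ 'd \<Rightarrow> real measure"
    and S :: "(real ^ 'd) set"
    and \<epsilon> \<Delta> :: real
  assumes eps: "0 < \<epsilon>" "\<epsilon> \<le> 0.01"
    and Delta: "\<Delta> \<ge> 0"
    and K1: "prob_space K1" "sets K1 = sets borel" "AE z in K1. snd z > 0"
    and K2: "prob_space K2" "sets K2 = sets borel" "AE z in K2. snd z > 0"
    and cond1: "cond_dist K1 \<kappa>1"
    and cond2: "cond_dist K2 \<kappa>2"
    and supp: "support_of (distr K1 borel fst) = S" "support_of (distr K2 borel fst) = S"
    and emd: "\<And>xi xj D D'. xi \<in> S \<Longrightarrow> xj \<in> S \<Longrightarrow>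
               D \<in> {\<kappa>1 xi, \<kappa>2 xi} \<Longrightarrow> D' \<in> {\<kappa>1 xj, \<kappa>2 xj} \<Longrightarrow>
               EMD D D' \<le> ennreal \<Delta>"
  shows "(\<forall>\<theta>\<ge>0. (\<integral>\<^sup>+ z. ennreal (ski_g (\<theta> + \<epsilon>) (snd z)) \<partial>K1)
            \<le> ennreal ((1 + \<epsilon>) * (1 + \<Delta> / \<epsilon>\<^sup>2)) * (\<integral>\<^sup>+ z. ennreal (ski_g \<theta> (snd z)) \<partial>K2)) \<and>
         ((INF \<theta>\<in>{0..}. \<integral>\<^sup>+ z. ennreal (ski_g \<theta> (snd z)) \<partial>K1)
            \<le> ennreal ((1 + \<epsilon>) * (1 + \<Delta> / \<epsilon>\<^sup>2)) * (INF \<theta>\<in>{0..}. \<integral>\<^sup>+ z. ennreal (ski_g \<theta> (snd z)) \<partial>K2))"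
proof -
  define C where "C = (1 + \<epsilon>) * (1 + \<Delta> / \<epsilon>\<^sup>2)"
  define c where "c = (1 + \<epsilon>) / \<epsilon>\<^sup>2"
  have e2: "\<epsilon> \<le> 1/2" using eps by simp
  have Cc: "C = (1 + \<epsilon>) + c * \<Delta>" unfolding C_def c_def by (simp add: field_simps)
  have Cpos: "C > 0" unfolding C_def using eps Delta by (simp add: add_pos_nonneg)
  define \<mu>1 where "\<mu>1 = distr K1 borel fst"
  define \<mu>2 where "\<mu>2 = distr K2 borel fst"
  have mf1: "fst \<in> measurable K1 borel" using measurable_cong_sets[OF K1(2) refl] fst_meas by blast
  have mf2: "fst \<in> measurable K2 borel" using measurable_cong_sets[OF K2(2) refl] fst_meas by blast
  have p1: "prob_space \<mu>1" unfolding \<mu>1_def by (rule prob_space.prob_space_distr[OF K1(1) mf1])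
  have p2: "prob_space \<mu>2" unfolding \<mu>2_def by (rule prob_space.prob_space_distr[OF K2(1) mf2])
  have AE1: "AE x in \<mu>1. x \<in> S" using supp_AE[of \<mu>1] supp(1) unfolding \<mu>1_def by simp
  have AE2: "AE x in \<mu>2. x \<in> S \<and> (AE y in \<kappa>2 x. y > 0)"
    using supp_AE[of \<mu>2] supp(2) AE_pos[OF K2(2) cond2 K2(3)] unfolding \<mu>2_def by auto
  have km2: "\<kappa>2 \<in> measurable \<mu>2 (subprob_algebra borel)" unfolding \<mu>2_def by (rule disint(1)[OF K2(2) cond2])
  have step: "(\<integral>\<^sup>+ z. ennreal (ski_g (\<theta> + \<epsilon>) (snd z)) \<partial>K1)
            \<le> ennreal C * (\<integral>\<^sup>+ z. ennreal (ski_g \<theta> (snd z)) \<partial>K2)" if th: "\<theta> \<ge> 0" for \<theta>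
  proof -
    define a where "a x = (\<integral>\<^sup>+y. ennreal (ski_g (\<theta> + \<epsilon>) y) \<partial>\<kappa>1 x)" for x
    define b where "b x = (\<integral>\<^sup>+y. ennreal (ski_g \<theta> y) \<partial>\<kappa>2 x)" for x
    have E1: "(\<integral>\<^sup>+ z. ennreal (ski_g (\<theta> + \<epsilon>) (snd z)) \<partial>K1) = (\<integral>\<^sup>+x. a x \<partial>\<mu>1)"
      unfolding a_def \<mu>1_def by (rule exp_eq[OF K1(2) cond1]) measurable
    have E2: "(\<integral>\<^sup>+ z. ennreal (ski_g \<theta> (snd z)) \<partial>K2) = (\<integral>\<^sup>+x. b x \<partial>\<mu>2)"
      unfolding b_def \<mu>2_def by (rule exp_eq[OF K2(2) cond2]) measurable
    have bm: "b \<in> borel_measurable \<mu>2"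
    proof -
      have "(\<lambda>M. integral\<^sup>N M (\<lambda>y. ennreal (ski_g \<theta> y))) \<in> borel_measurable (subprob_algebra borel)"
        by (rule nn_integral_measurable_subprob_algebra) measurable
      from measurable_compose[OF km2 this] show ?thesis unfolding b_def by (simp add: comp_def)
    qed
    have pw: "a x \<le> ennreal C * b x'" if x: "x \<in> S" and x': "x' \<in> S" and pos: "AE y in \<kappa>2 x'. y > 0" for x x'
    proof -
      have "a x \<le> ennreal (1 + \<epsilon>) * b x' + ennreal (c * \<Delta>)"
        unfolding a_def b_def c_def
        by (rule pair_bound[OF eps(1) e2 th Delta pos emd[OF x x']]) auto
      also have "ennreal (c * \<Delta>) \<le> ennreal (c * \<Delta>) * b x'"
        using b_ge1[OF disint(3)[OF K2(2) cond2] th pos] unfolding b_def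
        by (metis mult.right_neutral mult_left_mono zero_le)
      also have "ennreal (1 + \<epsilon>) * b x' + ennreal (c * \<Delta>) * b x' = (ennreal (1 + \<epsilon>) + ennreal (c * \<Delta>)) * b x'"
        by (simp add: distrib_right)
      also have "ennreal (1 + \<epsilon>) + ennreal (c * \<Delta>) = ennreal C"
        unfolding Cc using eps Delta by (intro ennreal_plus[symmetric]) (auto simp: c_def)
      finally show ?thesis by simp
    qed
    have one: "(\<integral>\<^sup>+x. a x \<partial>\<mu>1) \<le> ennreal C * b x'" if x': "x' \<in> S" "AE y in \<kappa>2 x'. y > 0" for x'
    proof -
      have "(\<integral>\<^sup>+x. a x \<partial>\<mu>1) \<le> (\<integral>\<^sup>+x. ennreal C * b x' \<partial>\<mu>1)"
        using AE1 by (intro nn_integral_mono_AE) (auto elim!: eventually_mono intro: pw x')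
      also have "\<dots> = ennreal C * b x'" using prob_space.emeasure_space_1[OF p1] by simp
      finally show ?thesis .
    qed
    have "(\<integral>\<^sup>+x. a x \<partial>\<mu>1) = (\<integral>\<^sup>+x'. (\<integral>\<^sup>+x. a x \<partial>\<mu>1) \<partial>\<mu>2)"
      using prob_space.emeasure_space_1[OF p2] by simp
    also have "\<dots> \<le> (\<integral>\<^sup>+x'. ennreal C * b x' \<partial>\<mu>2)"
    proof (rule nn_integral_mono_AE, rule eventually_mono[OF AE2])
      fix x' assume "x' \<in> S \<and> (AE y in \<kappa>2 x'. y > 0)"
      then show "(\<integral>\<^sup>+x. a x \<partial>\<mu>1) \<le> ennreal C * b x'" using one by blast
    qed
    also have "\<dots> = ennreal C * (\<integral>\<^sup>+x'. b x' \<partial>\<mu>2)" by (rule nn_integral_cmult[OF bm])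
    finally show ?thesis unfolding E1 E2 .
  qed
  have part2: "(INF \<theta>\<in>{0..}. \<integral>\<^sup>+ z. ennreal (ski_g \<theta> (snd z)) \<partial>K1)
            \<le> ennreal C * (INF \<theta>\<in>{0..}. \<integral>\<^sup>+ z. ennreal (ski_g \<theta> (snd z)) \<partial>K2)"
    (is "?I1 \<le> ennreal C * ?I2")
  proof (rule ennreal_le_epsilon)
    fix e :: real assume fin: "ennreal C * ?I2 < top" and e: "0 < e"
    have "?I2 < top"
    proof (rule ccontr)
      assume "\<not> ?I2 < top"
      then have "?I2 = top" using top.not_eq_extremum by blast
      then show False using fin Cpos by (simp add: ennreal_mult_top)
    qed
    then obtain r where r: "?I2 = ennreal r" "r \<ge> 0" by (cases "?I2" rule: ennreal_cases) auto
    have ec: "e / C > 0" using e Cpos by simp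
    have "?I2 < ennreal (r + e / C)" unfolding r(1) using r(2) ec by (intro ennreal_lessI) auto
    then obtain \<theta> where th: "\<theta> \<in> {0..}" and lt: "(\<integral>\<^sup>+ z. ennreal (ski_g \<theta> (snd z)) \<partial>K2) < ennreal (r + e / C)"
      unfolding INF_less_iff by blast
    have "?I1 \<le> (\<integral>\<^sup>+ z. ennreal (ski_g (\<theta> + \<epsilon>) (snd z)) \<partial>K1)"
      using th eps by (intro INF_lower) auto
    also have "\<dots> \<le> ennreal C * (\<integral>\<^sup>+ z. ennreal (ski_g \<theta> (snd z)) \<partial>K2)"
      using step th by auto
    also have "\<dots> \<le> ennreal C * ennreal (r + e / C)" using lt by (intro mult_left_mono) auto
    also have "\<dots> = ennreal (C * r + e)"
    proof -
      have "ennreal C * ennreal (r + e / C) = ennreal (C * (r + e / C))"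
        using Cpos r(2) ec by (intro ennreal_mult[symmetric]) auto
      also have "C * (r + e / C) = C * r + e" using Cpos by (simp add: distrib_left)
      finally show ?thesis .
    qed
    also have "\<dots> = ennreal C * ?I2 + ennreal e"
      unfolding r(1) using Cpos r(2) e by (simp add: ennreal_mult ennreal_plus)
    finally show "?I1 \<le> ennreal C * ?I2 + ennreal e" .
  qed
  show ?thesis using step part2 unfolding C_def by auto
qed


end
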